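(* If a finite simple graph $H$ has no odd cycle of length greater than $3$, then $H$ is a weak König–Egerváry graph.
   Context: A graph $H$ is a weak König–Egerváry graph if $H$ has a matching $M$ and a vertex set $Q \subseteq V(H)$ with $|Q| \leq |M|$ such that $Q$ is a vertex cover of $H - M$ (every edge of $H$ not in $M$ has an endpoint in $Q$). *)

theory Defs
  imports Main
begin

definition simple_graph :: "'a set \<Rightarrow> 'a set set \<Rightarrow> bool" where
  "simple_graph V E \<longleftrightarrow> finite V \<and>
     (\<forall>e\<in>E. \<exists>u v. e = {u, v} \<and> u \<noteq> v \<and> u \<in> V \<and> v \<in> V)"

definition matching :: "'a set set \<Rightarrow> 'a set set \<Rightarrow> bool" where
  "matching E M \<longleftrightarrow> M \<subseteq> E \<and> (\<forall>e\<in>M. \<forall>f\<in>M. e \<noteq> f \<longrightarrow> e \<inter> f = {})"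

definition covers :: "'a set \<Rightarrow> 'a set set \<Rightarrow> bool" where
  "covers Q F \<longleftrightarrow> (\<forall>e\<in>F. e \<inter> Q \<noteq> {})"

definition weak_KE :: "'a set \<Rightarrow> 'a set set \<Rightarrow> bool" where
  "weak_KE V E \<longleftrightarrow> (\<exists>M Q. matching E M \<and> Q \<subseteq> V \<and> card Q \<le> card M \<and> covers Q (E - M))"

definition is_cycle :: "'a set \<Rightarrow> 'a set set \<Rightarrow> 'a list \<Rightarrow> bool" where
  "is_cycle V E vs \<longleftrightarrow> length vs \<ge> 3 \<and> distinct vs \<and> set vs \<subseteq> V \<and>
     (\<forall>i < length vs. {vs ! i, vs ! ((i + 1) mod length vs)} \<in> E)"

end

theory Submission
  imports Defs
begin

definition maxm :: "'a set set \<Rightarrow> 'a set set \<Rightarrow> bool" where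
  "maxm E M \<longleftrightarrow> matching E M \<and> (\<forall>M'. matching E M' \<longrightarrow> card M' \<le> card M)"

definition walk :: "'a set set \<Rightarrow> 'a list \<Rightarrow> bool" where
  "walk E p \<longleftrightarrow> (\<forall>i. Suc i < length p \<longrightarrow> {p!i, p!Suc i} \<in> E)"

lemma walk_tl: "walk E (x # p) \<Longrightarrow> walk E p"
  unfolding walk_def by (metis Suc_less_eq length_Cons nth_Cons_Suc)

lemma walk_Cons: "walk E (x # y # p) \<longleftrightarrow> {x,y} \<in> E \<and> walk E (y # p)"
  unfolding walk_def
  apply (rule iffI)
   apply (intro conjI allI impI)
    apply (drule spec[of _ 0], simp)
   apply (drule_tac x="Suc i" in spec, simp)
  apply (intro allI impI)
  apply (case_tac i, simp_all)
  done

lemma match_unique: "matching E M \<Longrightarrow> e \<in> M \<Longrightarrow> f \<in> M \<Longrightarrow> x \<in> e \<Longrightarrow> x \<in> f \<Longrightarrow> e = f"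
  unfolding matching_def by blast

lemma simple_edge: "simple_graph V E \<Longrightarrow> {a,b} \<in> E \<Longrightarrow> a \<noteq> b \<and> a \<in> V \<and> b \<in> V"
proof -
  assume s: "simple_graph V E" and e: "{a,b} \<in> E"
  obtain u v where "{a,b} = {u,v}" "u\<noteq>v" "u\<in>V" "v\<in>V" using s e unfolding simple_graph_def by blast
  thus ?thesis by (auto simp: doubleton_eq_iff)
qed

lemma simple_finite: "simple_graph V E \<Longrightarrow> finite E"
proof -
  assume s: "simple_graph V E"
  have "E \<subseteq> Pow V" using s unfolding simple_graph_def by auto
  moreover have "finite V" using s unfolding simple_graph_def by simp
  ultimately show ?thesis using finite_subset by auto
qed

lemma aug1:
  assumes "matching E M" "{a,b} \<in> E" "a \<notin> \<Union>M" "b \<notin> \<Union>M" "finite M"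
  shows "matching E (insert {a,b} M) \<and> card (insert {a,b} M) = Suc (card M)"
proof -
  have "{a,b} \<notin> M" using assms(3) by blast
  moreover have "matching E (insert {a,b} M)" using assms(1-4) unfolding matching_def by blast
  ultimately show ?thesis using assms(5) by simp
qed

lemma maxm_cover:
  assumes "maxm E M" "finite E" "{a,b} \<in> E" "a \<notin> \<Union>M" shows "b \<in> \<Union>M"
proof (rule ccontr)
  assume "b \<notin> \<Union>M"
  have fM: "finite M" using assms(1,2) unfolding maxm_def matching_def by (meson rev_finite_subset)
  from aug1[OF _ assms(3,4) \<open>b \<notin> \<Union>M\<close> fM] assms(1)
  show False unfolding maxm_def by fastforce
qed

lemma augment:
  "matching E M \<Longrightarrow> finite M \<Longrightarrow> distinct q \<Longrightarrow> walk E q \<Longrightarrow> even (length q) \<Longrightarrow> length q \<ge> 2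
   \<Longrightarrow> hd q \<notin> \<Union>M \<Longrightarrow> last q \<notin> \<Union>M
   \<Longrightarrow> (\<forall>i. Suc (Suc (2*i)) < length q \<longrightarrow> {q!(2*i+1), q!(2*i+2)} \<in> M)
   \<Longrightarrow> \<exists>M'. matching E M' \<and> card M' = Suc (card M)"
proof (induction "length q" arbitrary: q M rule: less_induct)
  case less
  show ?case
  proof (cases "length q = 2")
    case True
    then obtain a b where q: "q = [a,b]"
      by (metis (no_types, lifting) One_nat_def Suc_1 Suc_length_conv length_0_conv)
    have "{a,b} \<in> E" using less.prems(4) q unfolding walk_def by force
    then show ?thesis using aug1[OF less.prems(1) _ _ _ less.prems(2)] less.prems(7,8) q by auto
  next
    case False
    then have "length q \<ge> 4" using less.prems(5,6) by presburger
    then have "\<exists>a b c r. q = a # b # c # r" by (auto simp: Suc_le_length_iff eval_nat_numeral)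
    then obtain a b c r where q: "q = a # b # c # r" by blast
    have "{q!0, q!Suc 0} \<in> E" using less.prems(4) \<open>4 \<le> length q\<close> unfolding walk_def by simp
    then have ab: "{a,b} \<in> E" using q by simp
    have bc: "{b,c} \<in> M" using less.prems(9)[rule_format, of 0] q by simp
    define M1 where "M1 = insert {a,b} (M - {{b,c}})"
    have afree: "a \<notin> \<Union>M" using less.prems(7) q by simp
    have M1m: "matching E M1"
    proof -
      have "\<forall>e\<in>M - {{b,c}}. b \<notin> e" using match_unique[OF less.prems(1) bc] by blast
      then show ?thesis using less.prems(1) afree ab unfolding M1_def matching_def by blast
    qed
    have cardM1: "card M1 = card M"
    proof -
      have "{a,b} \<notin> M - {{b,c}}" using afree by blast
      then have "card M1 = Suc (card (M - {{b,c}}))" unfolding M1_def using less.prems(2) by simp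
      also have "\<dots> = card M" using card.remove[OF less.prems(2) bc] by simp
      finally show ?thesis .
    qed
    have fM1: "finite M1" unfolding M1_def using less.prems(2) by simp
    have dq: "distinct (c # r)" using less.prems(3) q by simp
    have walkr: "walk E (c # r)" using walk_tl[of E b "c#r"] walk_tl[of E a "b#c#r"] less.prems(4) q by simp
    have cfree: "hd (c # r) \<notin> \<Union>M1"
    proof -
      have "c \<notin> e" if "e \<in> M - {{b,c}}" for e using match_unique[OF less.prems(1) bc] that by blast
      moreover have "c \<noteq> a" "c \<noteq> b" using less.prems(3) q by auto
      ultimately show ?thesis unfolding M1_def by auto
    qed
    have lfree: "last (c # r) \<notin> \<Union>M1"
    proof -
      have l: "last (c # r) = last q" using q by simp
      have "last q \<noteq> a" "last q \<noteq> b" using less.prems(3) q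
        by (auto simp: last_ConsR)
      moreover have "last q \<notin> \<Union>M" using less.prems(8) .
      ultimately show ?thesis unfolding M1_def l by auto
    qed
    have cond: "\<forall>i. Suc (Suc (2*i)) < length (c # r) \<longrightarrow> {(c#r)!(2*i+1), (c#r)!(2*i+2)} \<in> M1"
    proof (intro allI impI)
      fix i assume i: "Suc (Suc (2*i)) < length (c # r)"
      have "Suc (Suc (2*Suc i)) < length q" using i q by simp
      then have "{q!(2*Suc i+1), q!(2*Suc i+2)} \<in> M" using less.prems(9) by blast
      moreover have "q!(2*Suc i+1) = (c#r)!(2*i+1)" "q!(2*Suc i+2) = (c#r)!(2*i+2)" using q by auto
      ultimately have e: "{(c#r)!(2*i+1), (c#r)!(2*i+2)} \<in> M" by simp
      have lt: "2*i+3 < length q" "1 < length q" "2 < length q" using i q by auto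
      have "q!(2*i+3) \<noteq> q!1" "q!(2*i+3) \<noteq> q!2"
        using nth_eq_iff_index_eq[OF less.prems(3) lt(1) lt(2)] nth_eq_iff_index_eq[OF less.prems(3) lt(1) lt(3)] by auto
      then have "(c#r)!(2*i+1) \<noteq> b" "(c#r)!(2*i+1) \<noteq> c" using q by auto
      then have "{(c#r)!(2*i+1), (c#r)!(2*i+2)} \<noteq> {b,c}" by (metis insertI1 insertE singletonD)
      then show "{(c#r)!(2*i+1), (c#r)!(2*i+2)} \<in> M1" using e unfolding M1_def by blast
    qed
    have "length (c # r) < length q" "even (length (c#r))" "length (c#r) \<ge> 2"
      using q less.prems(5) \<open>4 \<le> length q\<close> by auto
    from less.hyps[OF this(1) M1m fM1 dq walkr this(2,3) cfree lfree cond]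
    show ?thesis using cardM1 by simp
  qed
qed


lemma edge_other: "simple_graph V E \<Longrightarrow> e \<in> E \<Longrightarrow> y \<in> e \<Longrightarrow> \<exists>y'. e = {y,y'} \<and> y \<noteq> y'"
  unfolding simple_graph_def by auto

lemma matching_finite: "finite E \<Longrightarrow> matching E M \<Longrightarrow> finite M"
  unfolding matching_def using finite_subset by auto

lemma walk_single: "walk E [x]"
  unfolding walk_def by simp

lemma altpath:
  assumes sg: "simple_graph V E" and mM: "maxm E M"
  shows "maxm E N \<Longrightarrow> y \<in> \<Union>M \<Longrightarrow> y \<notin> \<Union>N \<Longrightarrow> \<exists>p. distinct p \<and> walk E p \<and> odd (length p)
     \<and> length p \<ge> 3 \<and> hd p = y \<and> last p \<notin> \<Union>M
     \<and> (\<forall>i. 2*i+1 < length p \<longrightarrow> {p!(2*i), p!(2*i+1)} \<in> M)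
     \<and> set p \<subseteq> \<Union>((M - N) \<union> (N - M))"
proof (induction "card (M - N)" arbitrary: N y rule: less_induct)
  case less
  have fE: "finite E" using simple_finite[OF sg] .
  have mMm: "matching E M" and mNm: "matching E N" using mM less.prems(1) unfolding maxm_def by auto
  have fM: "finite M" using matching_finite[OF fE mMm] .
  have fN: "finite N" using matching_finite[OF fE mNm] .
  obtain e where e: "e \<in> M" "y \<in> e" using less.prems(2) by blast
  have "e \<in> E" using e mMm unfolding matching_def by auto
  then obtain y' where yy': "e = {y,y'}" "y \<noteq> y'" using edge_other[OF sg] e by blast
  have yyM: "{y,y'} \<in> M" using e yy' by simp
  have yyE: "{y,y'} \<in> E" using yyM mMm unfolding matching_def by auto
  have "y' \<in> \<Union>N" using maxm_cover[OF less.prems(1) fE yyE less.prems(3)] .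
  then obtain f where f: "f \<in> N" "y' \<in> f" by blast
  have "f \<in> E" using f mNm unfolding matching_def by auto
  then obtain z where yz': "f = {y',z}" "y' \<noteq> z" using edge_other[OF sg] f by blast
  have yzN: "{y',z} \<in> N" using f yz' by simp
  have yzE: "{y',z} \<in> E" using yzN mNm unfolding matching_def by auto
  have zy: "z \<noteq> y" using yzN less.prems(3) by blast
  have yyN: "{y,y'} \<notin> N" using less.prems(3) by blast
  have yzM: "{y',z} \<notin> M"
  proof
    assume "{y',z} \<in> M"
    then have "{y',z} = {y,y'}" using match_unique[OF mMm _ yyM, of "{y',z}" y'] by simp
    then show False using zy yy'(2) by (auto simp: doubleton_eq_iff)
  qed
  show ?case
  proof (cases "z \<in> \<Union>M")
    case False
    let ?p = "[y, y', z]"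
    have "walk E ?p" using walk_Cons yyE yzE walk_single by metis
    moreover have "\<forall>i. 2*i+1 < length ?p \<longrightarrow> {?p!(2*i), ?p!(2*i+1)} \<in> M"
    proof (intro allI impI)
      fix i assume "2*i+1 < length ?p"
      then have "i = 0" by simp
      then show "{?p!(2*i), ?p!(2*i+1)} \<in> M" using yyM by simp
    qed
    moreover have "set ?p \<subseteq> \<Union>((M - N) \<union> (N - M))"
      using yyM yyN yzN yzM by auto
    ultimately show ?thesis using yy'(2) yz'(2) zy False by (intro exI[of _ ?p]) auto
  next
    case True
    define N2 where "N2 = insert {y,y'} (N - {{y',z}})"
    have others: "y \<notin> g \<and> y' \<notin> g" if "g \<in> N - {{y',z}}" for g
    proof -
      have "y \<notin> g" using that less.prems(3) by blast
      moreover have "y' \<notin> g" using that match_unique[OF mNm _ yzN, of g y'] by auto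
      ultimately show ?thesis by simp
    qed
    have N2m: "matching E N2"
      unfolding N2_def matching_def
    proof (intro conjI ballI impI)
      show "insert {y, y'} (N - {{y', z}}) \<subseteq> E" using yyE mNm unfolding matching_def by auto
    next
      fix g h assume g: "g \<in> insert {y, y'} (N - {{y', z}})" and h: "h \<in> insert {y, y'} (N - {{y', z}})" and gh: "g \<noteq> h"
      show "g \<inter> h = {}"
      proof (cases "g = {y,y'}")
        case True
        then have "h \<in> N - {{y',z}}" using h gh by auto
        then show ?thesis using others True by auto
      next
        case False
        note gF = False
        show ?thesis
        proof (cases "h = {y,y'}")
          case True
          then have "g \<in> N - {{y',z}}" using g gF by auto
          then show ?thesis using others True by auto
        next
          case False
          then have "g \<in> N" "h \<in> N" using g h gF by auto
          then show ?thesis using mNm gh unfolding matching_def by auto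
        qed
      qed
    qed
    have cardN2: "card N2 = card N"
    proof -
      have "{y,y'} \<notin> N - {{y',z}}" using yyN by simp
      then have "card N2 = Suc (card (N - {{y',z}}))" unfolding N2_def using fN by simp
      also have "\<dots> = card N" using card.remove[OF fN yzN] by simp
      finally show ?thesis .
    qed
    have N2max: "maxm E N2" using less.prems(1) N2m cardN2 unfolding maxm_def by simp
    have zN2: "z \<notin> \<Union>N2"
    proof
      assume "z \<in> \<Union>N2"
      then obtain g where g: "g \<in> N2" "z \<in> g" by blast
      show False
      proof (cases "g = {y,y'}")
        case True then show False using g zy yz'(2) by auto
      next
        case False
        then have "g \<in> N" "g \<noteq> {y',z}" using g unfolding N2_def by auto
        then show False using match_unique[OF mNm _ yzN, of g z] g by auto
      qed
    qed
    have sub: "M - N2 \<subseteq> M - N"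
    proof
      fix g assume g: "g \<in> M - N2"
      then have "g \<noteq> {y,y'}" "g \<noteq> {y',z}" using yzM unfolding N2_def by auto
      then show "g \<in> M - N" using g unfolding N2_def by auto
    qed
    have "{y,y'} \<in> M - N" "{y,y'} \<notin> M - N2" using yyM yyN unfolding N2_def by auto
    then have "M - N2 \<subset> M - N" using sub by blast
    then have lt: "card (M - N2) < card (M - N)" using fM by (meson finite_Diff psubset_card_mono)
    obtain p' where p': "distinct p'" "walk E p'" "odd (length p')" "length p' \<ge> 3" "hd p' = z"
      "last p' \<notin> \<Union>M" "\<forall>i. 2*i+1 < length p' \<longrightarrow> {p'!(2*i), p'!(2*i+1)} \<in> M"
      "set p' \<subseteq> \<Union>((M - N2) \<union> (N2 - M))"
      using less.hyps[OF lt N2max True zN2] by blast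
    have sub2: "(M - N2) \<union> (N2 - M) \<subseteq> (M - N) \<union> (N - M)"
      using sub yyM unfolding N2_def by auto
    have ynot: "y \<notin> \<Union>((M - N2) \<union> (N2 - M))" "y' \<notin> \<Union>((M - N2) \<union> (N2 - M))"
    proof -
      have yyN2: "{y,y'} \<in> N2" unfolding N2_def by simp
      have "g = {y,y'}" if "g \<in> M" "w \<in> g" "w \<in> {y,y'}" for g w
        using match_unique[OF mMm that(1) yyM, of w] that by auto
      moreover have "g = {y,y'}" if "g \<in> N2" "w \<in> g" "w \<in> {y,y'}" for g w
        using match_unique[OF N2m that(1) yyN2, of w] that by auto
      ultimately show "y \<notin> \<Union>((M - N2) \<union> (N2 - M))" "y' \<notin> \<Union>((M - N2) \<union> (N2 - M))"
        using yyM yyN2 by blast+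
    qed
    obtain r where pr: "p' = z # r" using p'(4,5) by (cases p') auto
    let ?p = "y # y' # p'"
    have d: "distinct ?p" using p'(1,8) ynot yy'(2) by auto
    have w: "walk E ?p" using walk_Cons yyE yzE p'(2) pr by metis
    have c: "\<forall>i. 2*i+1 < length ?p \<longrightarrow> {?p!(2*i), ?p!(2*i+1)} \<in> M"
    proof (intro allI impI)
      fix i assume i: "2*i+1 < length ?p"
      show "{?p!(2*i), ?p!(2*i+1)} \<in> M"
      proof (cases i)
        case 0 then show ?thesis using yyM by simp
      next
        case (Suc j)
        then have "2*j+1 < length p'" using i by simp
        then have "{p'!(2*j), p'!(2*j+1)} \<in> M" using p'(7) by blast
        then show ?thesis using Suc by simp
      qed
    qed
    have st: "set ?p \<subseteq> \<Union>((M - N) \<union> (N - M))"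
    proof -
      have "set p' \<subseteq> \<Union>((M - N) \<union> (N - M))" using p'(8) Union_mono[OF sub2] by blast
      moreover have "{y,y'} \<in> (M - N) \<union> (N - M)" using yyM yyN by blast
      ultimately show ?thesis by auto
    qed
    have "last ?p = last p'" using pr by simp
    then show ?thesis using d w c st p'(3,4,6) by (intro exI[of _ ?p]) auto
  qed
qed


lemma cyc:
  assumes "distinct q" "set q \<subseteq> V" "walk E q" "length q \<ge> 3" "{last q, hd q} \<in> E"
  shows "is_cycle V E q"
  unfolding is_cycle_def
proof (intro conjI allI impI)
  fix i assume i: "i < length q"
  show "{q ! i, q ! ((i + 1) mod length q)} \<in> E"
  proof (cases "Suc i < length q")
    case True
    then show ?thesis using assms(3) unfolding walk_def by simp
  next
    case False
    then have ii: "i = length q - 1" using i by simp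
    then have "i + 1 = length q" using i by simp
    then have "(i+1) mod length q = 0" by simp
    moreover have "q ! i = last q" using ii assms(4) last_conv_nth[of q] by force
    moreover have "q ! 0 = hd q" using assms(4) hd_conv_nth[of q] by force
    ultimately show ?thesis using assms(5) by simp
  qed
qed (use assms in auto)

lemma cyc3:
  assumes "\<not> (\<exists>vs. is_cycle V E vs \<and> odd (length vs) \<and> length vs > 3)"
    "distinct q" "set q \<subseteq> V" "walk E q" "length q \<ge> 3" "{last q, hd q} \<in> E" "odd (length q)"
  shows "length q = 3"
  using cyc[OF assms(2-6)] assms(1,5,7) by force

lemma walk_set:
  assumes sg: "simple_graph V E" and w: "walk E q" and l: "length q \<ge> 2"
  shows "set q \<subseteq> V"
proof
  fix v assume "v \<in> set q"
  then obtain i where i: "i < length q" "q!i = v" by (auto simp: in_set_conv_nth)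
  show "v \<in> V"
  proof (cases "Suc i < length q")
    case True
    then have "{q!i, q!Suc i} \<in> E" using w unfolding walk_def by simp
    then show ?thesis using simple_edge[OF sg] i by blast
  next
    case False
    then obtain j where j: "i = Suc j" using l i by (cases i) auto
    then have "{q!j, q!Suc j} \<in> E" using w[unfolded walk_def, rule_format, of j] i by simp
    then show ?thesis using simple_edge[OF sg] i j by blast
  qed
qed

lemma P1:
  assumes sg: "simple_graph V E" and cls: "\<not> (\<exists>vs. is_cycle V E vs \<and> odd (length vs) \<and> length vs > 3)"
    and mM: "maxm E M" and xf: "x \<notin> \<Union>M" and xy: "{x,y} \<in> E" and mN: "maxm E N" and yN: "y \<notin> \<Union>N"
  shows "\<exists>y'. {y,y'} \<in> M \<and> {y',x} \<in> E"
proof -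
  have fE: "finite E" using simple_finite[OF sg] .
  have mMm: "matching E M" using mM unfolding maxm_def by auto
  have fM: "finite M" using matching_finite[OF fE mMm] .
  have yM: "y \<in> \<Union>M" using maxm_cover[OF mM fE xy xf] .
  obtain p where p: "distinct p" "walk E p" "odd (length p)" "length p \<ge> 3" "hd p = y" "last p \<notin> \<Union>M"
      "\<forall>i. 2*i+1 < length p \<longrightarrow> {p!(2*i), p!(2*i+1)} \<in> M"
    using altpath[OF sg mM mN yM yN] by blast
  have interior: "p!i \<in> \<Union>M" if "i+1 < length p" for i
  proof (cases "even i")
    case True
    then obtain j where "i = 2*j" by blast
    then show ?thesis using p(7) that by auto
  next
    case False
    then obtain j where j: "i = 2*j+1" using oddE by blast
    then show ?thesis using p(7)[rule_format, of j] that by auto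
  qed
  show ?thesis
  proof (cases "x \<in> set p")
    case True
    then obtain i where i: "i < length p" "p!i = x" by (auto simp: in_set_conv_nth)
    have "\<not> i+1 < length p" using interior xf i by auto
    then have "i = length p - 1" using i by simp
    then have lx: "last p = x" using i p(4) last_conv_nth[of p] by force
    have sp: "set p \<subseteq> V" using walk_set[OF sg p(2)] p(4) by simp
    have "{last p, hd p} \<in> E" using lx p(5) xy by (simp add: insert_commute)
    then have l3: "length p = 3" using cyc3[OF cls p(1) sp p(2) p(4) _ p(3)] by simp
    have "{p!0, p!1} \<in> M" using p(7)[rule_format, of 0] l3 by simp
    moreover have "{p!1, p!Suc 1} \<in> E" using p(2) l3 unfolding walk_def by simp
    moreover have "p!0 = y" using p(5) l3 hd_conv_nth[of p] by force
    moreover have "p!2 = x" using lx l3 last_conv_nth[of p] by force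
    ultimately show ?thesis by (intro exI[of _ "p!1"]) (simp add: numeral_2_eq_2)
  next
    case False
    obtain r where pr: "p = y # r" using p(4,5) by (cases p) auto
    let ?q = "x # p"
    have "distinct ?q" using False p(1) by simp
    moreover have "walk E ?q" using walk_Cons xy p(2) pr by metis
    moreover have "even (length ?q)" using p(3) by simp
    moreover have "length ?q \<ge> 2" using p(4) by simp
    moreover have "hd ?q \<notin> \<Union>M" using xf by simp
    moreover have "last ?q \<notin> \<Union>M" using p(6) pr by simp
    moreover have "\<forall>i. Suc (Suc (2*i)) < length ?q \<longrightarrow> {?q!(2*i+1), ?q!(2*i+2)} \<in> M"
    proof (intro allI impI)
      fix i assume "Suc (Suc (2*i)) < length ?q"
      then have "2*i+1 < length p" by simp
      then show "{?q!(2*i+1), ?q!(2*i+2)} \<in> M" using p(7) by simp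
    qed
    ultimately obtain M' where "matching E M'" "card M' = Suc (card M)"
      using augment[OF mMm fM] by blast
    then show ?thesis using mM unfolding maxm_def by fastforce
  qed
qed


lemma sub_props:
  assumes "distinct P" "set P \<subseteq> V" "walk E P" "a \<le> b" "b < length P"
  defines "q \<equiv> drop a (take (Suc b) P)"
  shows "distinct q \<and> set q \<subseteq> V \<and> walk E q \<and> length q = Suc b - a \<and> hd q = P!a \<and> last q = P!b"
proof -
  have "distinct q" unfolding q_def using assms(1) by simp
  moreover have "set q \<subseteq> V" unfolding q_def using assms(2)
    by (meson order_trans set_drop_subset set_take_subset)
  moreover have "walk E q" unfolding walk_def
  proof (intro allI impI)
    fix i assume i: "Suc i < length q"
    then have "Suc (a + i) < length P" "Suc (a+i) < Suc b" unfolding q_def using assms(4,5) by auto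
    then have "{P!(a+i), P!Suc (a+i)} \<in> E" using assms(3) unfolding walk_def by blast
    moreover have "q!i = P!(a+i)" "q!Suc i = P!Suc (a+i)" unfolding q_def using i q_def assms(4,5) by auto
    ultimately show "{q!i, q!Suc i} \<in> E" by simp
  qed
  moreover have lq: "length q = Suc b - a" unfolding q_def using assms(4,5) by simp
  moreover have "hd q = P!a" unfolding q_def using assms(4,5) by (simp add: hd_drop_conv_nth)
  moreover have "last q = P!b"
  proof -
    have "q \<noteq> []" using lq assms(4) by auto
    then have "last q = q ! (length q - 1)" by (simp add: last_conv_nth)
    also have "\<dots> = P ! b" unfolding q_def using assms(4,5) lq q_def by auto
    finally show ?thesis .
  qed
  ultimately show ?thesis by blast
qed

lemma oddcyc:
  assumes "\<not> (\<exists>vs. is_cycle V E vs \<and> odd (length vs) \<and> length vs > 3)"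
    "distinct q" "set q \<subseteq> V" "walk E q" "length q \<ge> 4" "{last q, hd q} \<in> E"
  shows "even (length q)"
  using cyc3[OF assms(1-4) _ assms(6)] assms(5) by fastforce

lemma swap:
  assumes fE: "finite E" and mN: "maxm E N" and ab: "{a,b} \<in> N" and ca: "{c,a} \<in> E" and cf: "c \<notin> \<Union>N"
    and cb: "c \<noteq> b" "a \<noteq> b"
  defines "N' \<equiv> insert {c,a} (N - {{a,b}})"
  shows "maxm E N' \<and> b \<notin> \<Union>N' \<and> (\<forall>e\<in>N. e \<noteq> {a,b} \<longrightarrow> e \<in> N')"
proof -
  have mNm: "matching E N" using mN unfolding maxm_def by auto
  have fN: "finite N" using matching_finite[OF fE mNm] .
  have others: "c \<notin> g \<and> a \<notin> g \<and> b \<notin> g" if "g \<in> N - {{a,b}}" for g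
  proof -
    have "c \<notin> g" using that cf by blast
    moreover have "a \<notin> g" using that match_unique[OF mNm _ ab, of g a] by auto
    moreover have "b \<notin> g" using that match_unique[OF mNm _ ab, of g b] by auto
    ultimately show ?thesis by simp
  qed
  have N'm: "matching E N'"
    unfolding N'_def matching_def
  proof (intro conjI ballI impI)
    show "insert {c, a} (N - {{a, b}}) \<subseteq> E" using ca mNm unfolding matching_def by auto
  next
    fix g h assume g: "g \<in> insert {c, a} (N - {{a, b}})" and h: "h \<in> insert {c, a} (N - {{a, b}})" and gh: "g \<noteq> h"
    show "g \<inter> h = {}"
    proof (cases "g = {c,a}")
      case True
      then have "h \<in> N - {{a,b}}" using h gh by auto
      then show ?thesis using others True by auto
    next
      case False
      note gF = False
      show ?thesis
      proof (cases "h = {c,a}")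
        case True
        then have "g \<in> N - {{a,b}}" using g gF by auto
        then show ?thesis using others True by auto
      next
        case False
        then have "g \<in> N" "h \<in> N" using g h gF by auto
        then show ?thesis using mNm gh unfolding matching_def by auto
      qed
    qed
  qed
  have cardN': "card N' = card N"
  proof -
    have "{c,a} \<notin> N - {{a,b}}" using cf by auto
    then have "card N' = Suc (card (N - {{a,b}}))" unfolding N'_def using fN by simp
    also have "\<dots> = card N" using card.remove[OF fN ab] by simp
    finally show ?thesis .
  qed
  have "maxm E N'" using mN N'm cardN' unfolding maxm_def by simp
  moreover have "b \<notin> \<Union>N'" using others cb unfolding N'_def by auto
  moreover have "\<forall>e\<in>N. e \<noteq> {a,b} \<longrightarrow> e \<in> N'" unfolding N'_def by auto
  ultimately show ?thesis by blast
qed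


lemma endlemma:
  assumes sg: "simple_graph V E" and cls: "\<not> (\<exists>vs. is_cycle V E vs \<and> odd (length vs) \<and> length vs > 3)"
    and ine: "\<forall>v\<in>V. \<exists>N. maxm E N \<and> v \<notin> \<Union>N"
    and dP: "distinct P" and sP: "set P \<subseteq> V" and wP: "walk E P" and lP: "length P \<ge> 2"
    and lng: "\<forall>P'. distinct P' \<and> set P' \<subseteq> V \<and> walk E P' \<longrightarrow> length P' \<le> length P"
  shows "length P \<ge> 3 \<and> {P!0, P!2} \<in> E \<and> {P!1, P!2} \<in> E \<and> (\<forall>u. {P!0, u} \<in> E \<longrightarrow> u = P!1 \<or> u = P!2)"
proof -
  have fE: "finite E" using simple_finite[OF sg] .
  have neq: "P!i \<noteq> P!k" if "i < length P" "k < length P" "i \<noteq> k" for i k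
    using dP that by (simp add: nth_eq_iff_index_eq)
  have walkE: "{P!i, P!Suc i} \<in> E" if "Suc i < length P" for i using wP that unfolding walk_def by blast
  have e01: "{P!0, P!1} \<in> E" using walkE[of 0] lP by simp
  have lt0: "0 < length P" using lP by linarith
  then have "P!0 \<in> set P" by (rule nth_mem)
  then have v0V: "P!0 \<in> V" using sP by blast
  obtain a r where Pa: "P = a # r" using lP by (cases P) auto
  have nbr: "u \<in> set P" if "{P!0, u} \<in> E" for u
  proof (rule ccontr)
    assume un: "u \<notin> set P"
    have "distinct (u # P)" using dP un by simp
    moreover have "set (u # P) \<subseteq> V" using sP simple_edge[OF sg that] by auto
    moreover have "walk E (u # P)" using walk_Cons[of E u a r] wP that Pa by (simp add: insert_commute)
    ultimately have "length (u # P) \<le> length P" using lng by blast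
    then show False by simp
  qed
  have idx: "\<exists>i<length P. P!i = u" if "{P!0, u} \<in> E" for u using nbr[OF that] by (simp add: in_set_conv_nth)
  obtain N where mN: "maxm E N" and v0N: "P!0 \<notin> \<Union>N" using ine v0V by blast
  have mNm: "matching E N" using mN unfolding maxm_def by auto
  have NE: "e \<in> E" if "e \<in> N" for e using mNm that unfolding matching_def by auto
  have mate: "\<exists>u'. {u,u'} \<in> N \<and> {u', P!0} \<in> E" if "{P!0, u} \<in> E" for u
  proof -
    have "u \<in> V" using simple_edge[OF sg that] by blast
    then obtain N1 where "maxm E N1" "u \<notin> \<Union>N1" using ine by blast
    then show ?thesis using P1[OF sg cls mN v0N that] by blast
  qed
  have far1: "odd j" if "4 \<le> j" "j < length P" "{P!j, P!0} \<in> E" for j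
  proof -
    define q where "q = drop 0 (take (Suc j) P)"
    have sp: "distinct q \<and> set q \<subseteq> V \<and> walk E q \<and> length q = Suc j - 0 \<and> hd q = P!0 \<and> last q = P!j"
      using sub_props[OF dP sP wP _ that(2), of 0] that(1) unfolding q_def by simp
    have "4 \<le> length q" using sp that(1) by simp
    moreover have "{last q, hd q} \<in> E" using sp that(3) by simp
    ultimately have "even (length q)" using oddcyc[OF cls, of q] sp by blast
    then show ?thesis using sp by simp
  qed
  have far2: "even j" if "4 \<le> j" "j < length P" "{P!j, P!1} \<in> E" for j
  proof -
    define q where "q = drop 1 (take (Suc j) P)"
    have sp: "distinct q \<and> set q \<subseteq> V \<and> walk E q \<and> length q = Suc j - 1 \<and> hd q = P!1 \<and> last q = P!j"
      using sub_props[OF dP sP wP _ that(2), of 1] that(1) unfolding q_def by simp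
    have "4 \<le> length q" using sp that(1) by simp
    moreover have "{last q, hd q} \<in> E" using sp that(3) by simp
    ultimately have "even (length q)" using oddcyc[OF cls, of q] sp by blast
    then show ?thesis using sp by simp
  qed
  obtain u1 where u1: "{P!1, u1} \<in> N" "{u1, P!0} \<in> E" using mate[OF e01] by blast
  have "{P!0, u1} \<in> E" using u1(2) by (simp add: insert_commute)
  then obtain j where j: "j < length P" "P!j = u1" using idx by blast
  have j0: "j \<noteq> 0"
  proof
    assume "j = 0"
    then have "P!0 \<in> \<Union>N" using j u1(1) by auto
    then show False using v0N by simp
  qed
  have j1: "j \<noteq> 1" using j simple_edge[OF sg NE[OF u1(1)]] by blast
  have j4: "j < 4"
  proof (rule ccontr)
    assume "\<not> j < 4"
    then have "4 \<le> j" by simp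
    moreover have "{P!j, P!0} \<in> E" "{P!j, P!1} \<in> E" using j u1 NE[OF u1(1)] by (auto simp: insert_commute)
    ultimately show False using far1 far2 j(1) by blast
  qed
  have j3: "j \<noteq> 3"
  proof
    assume j3: "j = 3"
    have l4: "length P \<ge> 4" using j j3 by simp
    have e13N: "{P!1, P!3} \<in> N" using u1 j j3 by simp
    have e30: "{P!3, P!0} \<in> E" using u1 j j3 by simp
    have e12: "{P!1, P!2} \<in> E" using walkE[of 1] l4 by (simp add: numeral_2_eq_2)
    have e23: "{P!2, P!3} \<in> E" using walkE[of 2] l4 by (simp add: numeral_3_eq_3)
    have e32: "{P!3, P!2} \<in> E" using e23 by (simp add: insert_commute)
    have lt: "0 < length P" "1 < length P" "2 < length P" "3 < length P" using l4 by linarith+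
    have d01: "P!0 \<noteq> P!1" using neq[OF lt(1) lt(2)] by simp
    have d02: "P!0 \<noteq> P!2" using neq[OF lt(1) lt(3)] by simp
    have d03: "P!0 \<noteq> P!3" using neq[OF lt(1) lt(4)] by simp
    have d12: "P!1 \<noteq> P!2" using neq[OF lt(2) lt(3)] by simp
    have d13: "P!1 \<noteq> P!3" using neq[OF lt(2) lt(4)] by simp
    have d23: "P!2 \<noteq> P!3" using neq[OF lt(3) lt(4)] by simp
    have v2N: "P!2 \<in> \<Union>N"
    proof (rule ccontr)
      assume v2: "P!2 \<notin> \<Union>N"
      let ?q = "[P!0, P!1, P!3, P!2]"
      have "distinct ?q" using d01 d02 d03 d12 d13 d23 by auto
      moreover have "walk E ?q" using e01 NE[OF e13N] e32 by (simp add: walk_Cons walk_single)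
      moreover have "\<forall>i. Suc (Suc (2*i)) < length ?q \<longrightarrow> {?q!(2*i+1), ?q!(2*i+2)} \<in> N"
      proof (intro allI impI)
        fix i assume "Suc (Suc (2*i)) < length ?q"
        then have "i = 0" by simp
        then show "{?q!(2*i+1), ?q!(2*i+2)} \<in> N" using e13N by simp
      qed
      moreover have "finite N" using matching_finite[OF fE mNm] .
      ultimately obtain M' where "matching E M'" "card M' = Suc (card N)"
        using augment[OF mNm, of ?q] v0N v2 by auto
      then show False using mN unfolding maxm_def by fastforce
    qed
    then obtain g where g: "g \<in> N" "P!2 \<in> g" by blast
    then obtain u where gu: "g = {P!2, u}" "P!2 \<noteq> u" using edge_other[OF sg NE[OF g(1)]] by blast
    have e2u: "{P!2, u} \<in> N" using g gu by simp
    have u0: "u \<noteq> P!0" using e2u v0N by blast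
    have u13: "u \<noteq> P!1 \<and> u \<noteq> P!3"
    proof -
      have "u \<in> {P!1, P!3} \<Longrightarrow> {P!2,u} = {P!1,P!3}" using match_unique[OF mNm e2u e13N, of u] by simp
      then show ?thesis using d12 d23 by (auto simp: doubleton_eq_iff)
    qed
    have uV: "u \<in> V" using simple_edge[OF sg NE[OF e2u]] by blast
    have "P!2 \<in> set P" using lt(3) by (rule nth_mem)
    then have "P!2 \<in> V" using sP by blast
    then obtain N2 where N2: "maxm E N2" "P!2 \<notin> \<Union>N2" using ine by blast
    have s1: "maxm E (insert {P!0, P!1} (N - {{P!1, P!3}})) \<and> P!3 \<notin> \<Union>(insert {P!0, P!1} (N - {{P!1, P!3}}))
       \<and> (\<forall>e\<in>N. e \<noteq> {P!1, P!3} \<longrightarrow> e \<in> insert {P!0, P!1} (N - {{P!1, P!3}}))"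
      using swap[OF fE mN e13N e01 v0N d03 d13] .
    have "{P!2,u} \<noteq> {P!1,P!3}" using d12 d23 by (auto simp: doubleton_eq_iff)
    then have e2u1: "{P!2, u} \<in> insert {P!0, P!1} (N - {{P!1, P!3}})" using s1 e2u by blast
    obtain y1 where y1: "{P!2, y1} \<in> insert {P!0, P!1} (N - {{P!1, P!3}})" "{y1, P!3} \<in> E"
      using P1[OF sg cls conjunct1[OF s1] conjunct1[OF conjunct2[OF s1]] e32 N2] by blast
    have "{P!2, y1} = {P!2, u}"
      using match_unique[OF _ y1(1) e2u1, of _ "P!2"] conjunct1[OF s1] unfolding maxm_def by auto
    then have eu3: "{u, P!3} \<in> E" using y1(2) by (auto simp: doubleton_eq_iff)
    have e31N: "{P!3, P!1} \<in> N" using e13N by (simp add: insert_commute)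
    have e03: "{P!0, P!3} \<in> E" using e30 by (simp add: insert_commute)
    have s2: "maxm E (insert {P!0, P!3} (N - {{P!3, P!1}})) \<and> P!1 \<notin> \<Union>(insert {P!0, P!3} (N - {{P!3, P!1}}))
       \<and> (\<forall>e\<in>N. e \<noteq> {P!3, P!1} \<longrightarrow> e \<in> insert {P!0, P!3} (N - {{P!3, P!1}}))"
      using swap[OF fE mN e31N e03 v0N d01 d13[symmetric]] .
    have "{P!2,u} \<noteq> {P!3,P!1}" using d12 d23 by (auto simp: doubleton_eq_iff)
    then have e2u2: "{P!2, u} \<in> insert {P!0, P!3} (N - {{P!3, P!1}})" using s2 e2u by blast
    obtain y2 where y2: "{P!2, y2} \<in> insert {P!0, P!3} (N - {{P!3, P!1}})" "{y2, P!1} \<in> E"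
      using P1[OF sg cls conjunct1[OF s2] conjunct1[OF conjunct2[OF s2]] e12 N2] by blast
    have "{P!2, y2} = {P!2, u}"
      using match_unique[OF _ y2(1) e2u2, of _ "P!2"] conjunct1[OF s2] unfolding maxm_def by auto
    then have eu1: "{u, P!1} \<in> E" using y2(2) by (auto simp: doubleton_eq_iff)
    let ?c = "[P!0, P!1, u, P!2, P!3]"
    have "distinct ?c" using d01 d02 d03 d12 d13 d23 u0 u13 gu(2) by auto
    moreover have "set ?c \<subseteq> V" using sP uV nth_mem[OF lt(1)] nth_mem[OF lt(2)] nth_mem[OF lt(3)] nth_mem[OF lt(4)] by auto
    moreover have "{P!1, u} \<in> E" "{u, P!2} \<in> E" using eu1 NE[OF e2u] by (simp_all add: insert_commute)
    then have "walk E ?c" using e01 e23 by (simp add: walk_Cons walk_single)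
    moreover have "{last ?c, hd ?c} \<in> E" using e30 by simp
    ultimately have "length ?c = 3" using cyc3[OF cls, of ?c] by (simp only:) simp
    then show False by simp
  qed
  have j2: "j = 2" using j0 j1 j3 j4 by simp
  have e12N: "{P!1, P!2} \<in> N" using u1 j j2 by simp
  have e02: "{P!0, P!2} \<in> E" using u1 j j2 by (simp add: insert_commute)
  have l3: "length P \<ge> 3" using j j2 by simp
  have far3: "even i" if "4 \<le> i" "i < length P" "{P!i, P!0} \<in> E" for i
  proof -
    define q0 where "q0 = drop 2 (take (Suc i) P)"
    have sp: "distinct q0 \<and> set q0 \<subseteq> V \<and> walk E q0 \<and> length q0 = Suc i - 2 \<and> hd q0 = P!2 \<and> last q0 = P!i"
      using sub_props[OF dP sP wP, of 2 i] that unfolding q0_def by simp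
    have "P!0 \<notin> set q0"
    proof
      assume "P!0 \<in> set q0"
      then obtain m where m: "m < length q0" "q0!m = P!0" by (auto simp: in_set_conv_nth)
      then have "q0!m = P!(2+m)" "2 + m < length P" unfolding q0_def using that by auto
      then show False using m neq[OF _ lt0, of "2+m"] by auto
    qed
    then have dq: "distinct (P!0 # q0)" using sp by simp
    have "q0 \<noteq> []" using sp that(1) by auto
    then obtain r0 where q0r: "q0 = P!2 # r0" using sp by (cases q0) auto
    have wq: "walk E (P!0 # q0)" using e02 sp q0r by (simp add: walk_Cons)
    have s0: "set (P!0 # q0) \<subseteq> V" using sp v0V by simp
    have l0: "4 \<le> length (P!0 # q0)" using sp that(1) by simp
    have "last (P!0 # q0) = P!i" "hd (P!0 # q0) = P!0" using sp q0r by auto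
    then have w0: "{last (P!0 # q0), hd (P!0 # q0)} \<in> E" using that(3) by simp
    have "even (length (P!0 # q0))" using oddcyc[OF cls dq s0 wq l0 w0] .
    then show ?thesis using sp that by simp
  qed
  have noFar: "{P!0, P!i} \<notin> E" if "4 \<le> i" "i < length P" for i
    using far1[OF that] far3[OF that] by (auto simp: insert_commute)
  have fin: "u = P!1 \<or> u = P!2" if eu: "{P!0, u} \<in> E" for u
  proof -
    obtain i where i: "i < length P" "P!i = u" using idx[OF eu] by blast
    have i0: "i \<noteq> 0"
    proof
      assume "i = 0"
      then show False using i simple_edge[OF sg eu] by simp
    qed
    have i4: "i < 4"
    proof (rule ccontr)
      assume "\<not> i < 4"
      then have "{P!0, P!i} \<notin> E" using noFar i(1) by simp
      then show False using eu i(2) by simp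
    qed
    have i3: "i \<noteq> 3"
    proof
      assume i3: "i = 3"
      obtain u3 where u3: "{u, u3} \<in> N" "{u3, P!0} \<in> E" using mate[OF eu] by blast
      have "{P!0, u3} \<in> E" using u3(2) by (simp add: insert_commute)
      then obtain l where l: "l < length P" "P!l = u3" using idx by blast
      have "l \<noteq> 0"
      proof
        assume "l = 0"
        then have "P!0 \<in> \<Union>N" using l u3(1) by auto
        then show False using v0N by simp
      qed
      moreover have "l \<noteq> 3"
      proof
        assume "l = 3"
        then have "u3 = u" using l i i3 by simp
        then show False using simple_edge[OF sg NE[OF u3(1)]] by simp
      qed
      moreover have "l \<noteq> 1 \<and> l \<noteq> 2"
      proof -
        have "u3 \<in> {P!1, P!2} \<Longrightarrow> {u,u3} = {P!1,P!2}" using match_unique[OF mNm u3(1) e12N, of u3] by simp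
        moreover have lt3: "3 < length P" "1 < length P" "2 < length P" using i i3 by simp_all
        moreover have "u \<noteq> P!1" "u \<noteq> P!2" using i i3 neq[OF lt3(1) lt3(2)] neq[OF lt3(1) lt3(3)] by auto
        ultimately have "u3 \<notin> {P!1, P!2}" by (auto simp: doubleton_eq_iff)
        then show ?thesis using l by auto
      qed
      ultimately have l4: "4 \<le> l" by simp
      have "{P!0, P!l} \<in> E" using u3(2) l(2) by (simp add: insert_commute)
      then show False using noFar[OF l4 l(1)] by simp
    qed
    have "i = 1 \<or> i = 2" using i0 i3 i4 by presburger
    then show ?thesis using i by auto
  qed
  show ?thesis using l3 e02 NE[OF e12N] fin by blast
qed


lemma pendant:
  assumes sg: "simple_graph V E" and cls: "\<not> (\<exists>vs. is_cycle V E vs \<and> odd (length vs) \<and> length vs > 3)"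
    and ine: "\<forall>v\<in>V. \<exists>N. maxm E N \<and> v \<notin> \<Union>N" and ne: "E \<noteq> {}"
  shows "\<exists>a b c. {a,b} \<in> E \<and> {a,c} \<in> E \<and> {b,c} \<in> E \<and> (\<forall>u. {a,u} \<in> E \<longrightarrow> u = b \<or> u = c)
     \<and> (\<forall>u. {b,u} \<in> E \<longrightarrow> u = a \<or> u = c)"
proof -
  obtain e where e: "e \<in> E" using ne by blast
  then obtain x y where xy: "e = {x,y}" "x \<noteq> y" "x \<in> V" "y \<in> V" using sg unfolding simple_graph_def by blast
  define isP where "isP P \<longleftrightarrow> distinct P \<and> set P \<subseteq> V \<and> walk E P" for P
  have p0: "isP [x,y]" unfolding isP_def using xy e by (simp add: walk_Cons walk_single)
  have fV: "finite V" using sg unfolding simple_graph_def by simp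
  have bnd: "length P < Suc (card V)" if "isP P" for P
  proof -
    have "length P = card (set P)" using that unfolding isP_def by (simp add: distinct_card)
    also have "\<dots> \<le> card V" using that fV unfolding isP_def by (simp add: card_mono)
    finally show ?thesis by simp
  qed
  have "\<forall>P. isP P \<longrightarrow> length P < Suc (card V)" using bnd by blast
  then obtain P where P: "isP P" "\<forall>P'. isP P' \<longrightarrow> length P' \<le> length P"
    using ex_has_greatest_nat[where P=isP and k="[x,y]" and f=length and b="Suc (card V)"] p0 by blast
  have "length [x,y] \<le> length P" using P(2) p0 by blast
  then have lP: "length P \<ge> 2" by simp
  have lng: "\<forall>P'. distinct P' \<and> set P' \<subseteq> V \<and> walk E P' \<longrightarrow> length P' \<le> length P"
    using P(2) unfolding isP_def by blast
  have dP: "distinct P" and sP: "set P \<subseteq> V" and wP: "walk E P" using P(1) unfolding isP_def by auto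
  have E1: "length P \<ge> 3 \<and> {P!0, P!2} \<in> E \<and> {P!1, P!2} \<in> E \<and> (\<forall>u. {P!0, u} \<in> E \<longrightarrow> u = P!1 \<or> u = P!2)"
    using endlemma[OF sg cls ine dP sP wP lP lng] .
  then obtain a b c r where Pr: "P = a # b # c # r"
  proof -
    have "\<exists>a b c r. P = a # b # c # r" using E1 by (auto simp: Suc_le_length_iff eval_nat_numeral)
    then show ?thesis using that by blast
  qed
  have eab: "{a,b} \<in> E" using wP Pr by (simp add: walk_Cons)
  have eac: "{a,c} \<in> E" and ebc: "{b,c} \<in> E" and na: "\<forall>u. {a,u} \<in> E \<longrightarrow> u = b \<or> u = c"
    using E1 Pr by auto
  let ?P' = "b # a # c # r"
  have "distinct ?P'" using dP Pr by auto
  moreover have "set ?P' \<subseteq> V" using sP Pr by auto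
  moreover have "walk E ?P'"
  proof -
    have "walk E (c # r)" using walk_tl[of E b "c#r"] walk_tl[of E a "b#c#r"] wP Pr by simp
    then show ?thesis using eab eac by (simp add: walk_Cons insert_commute)
  qed
  moreover have "length ?P' \<ge> 2" by simp
  moreover have "\<forall>P''. distinct P'' \<and> set P'' \<subseteq> V \<and> walk E P'' \<longrightarrow> length P'' \<le> length ?P'"
    using lng Pr by simp
  ultimately have E2: "length ?P' \<ge> 3 \<and> {?P'!0, ?P'!2} \<in> E \<and> {?P'!1, ?P'!2} \<in> E \<and> (\<forall>u. {?P'!0, u} \<in> E \<longrightarrow> u = ?P'!1 \<or> u = ?P'!2)"
    by (rule endlemma[OF sg cls ine])
  then have nb: "\<forall>u. {b,u} \<in> E \<longrightarrow> u = a \<or> u = c" by simp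
  show ?thesis using eab eac ebc na nb by blast
qed

lemma cyc_mono: "is_cycle V' E' vs \<Longrightarrow> V' \<subseteq> V \<Longrightarrow> E' \<subseteq> E \<Longrightarrow> is_cycle V E vs"
  unfolding is_cycle_def by blast

lemma restrict:
  assumes sg: "simple_graph V E" and cls: "\<not> (\<exists>vs. is_cycle V E vs \<and> odd (length vs) \<and> length vs > 3)"
  shows "simple_graph (V - S) {e\<in>E. e \<inter> S = {}} \<and> \<not> (\<exists>vs. is_cycle (V - S) {e\<in>E. e \<inter> S = {}} vs \<and> odd (length vs) \<and> length vs > 3)"
proof
  show "simple_graph (V - S) {e\<in>E. e \<inter> S = {}}" unfolding simple_graph_def
  proof (intro conjI ballI)
    show "finite (V - S)" using sg unfolding simple_graph_def by simp
    fix e assume "e \<in> {e\<in>E. e \<inter> S = {}}"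
    then have e: "e \<in> E" "e \<inter> S = {}" by auto
    obtain u v where "e = {u,v}" "u\<noteq>v" "u\<in>V" "v\<in>V" using sg e(1) unfolding simple_graph_def by blast
    then show "\<exists>u v. e = {u,v} \<and> u\<noteq>v \<and> u \<in> V - S \<and> v \<in> V - S" using e(2) by blast
  qed
  show "\<not> (\<exists>vs. is_cycle (V - S) {e\<in>E. e \<inter> S = {}} vs \<and> odd (length vs) \<and> length vs > 3)"
  proof
    assume "\<exists>vs. is_cycle (V - S) {e\<in>E. e \<inter> S = {}} vs \<and> odd (length vs) \<and> length vs > 3"
    then obtain vs where "is_cycle (V - S) {e\<in>E. e \<inter> S = {}} vs" "odd (length vs)" "length vs > 3" by blast
    moreover have "is_cycle V E vs" using cyc_mono[OF calculation(1)] by blast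
    ultimately show False using cls by blast
  qed
qed


lemma main:
  "simple_graph V E \<Longrightarrow> \<not> (\<exists>vs. is_cycle V E vs \<and> odd (length vs) \<and> length vs > 3) \<Longrightarrow> maxm E M
   \<Longrightarrow> \<exists>Q. Q \<subseteq> V \<and> card Q \<le> card M \<and> covers Q (E - M)"
proof (induction "card V" arbitrary: V E M rule: less_induct)
  case less
  note sg = less.prems(1) and cls = less.prems(2) and mM = less.prems(3)
  have fV: "finite V" using sg unfolding simple_graph_def by simp
  have fE: "finite E" using simple_finite[OF sg] .
  have mMm: "matching E M" using mM unfolding maxm_def by simp
  have fM: "finite M" using matching_finite[OF fE mMm] .
  have ME: "e \<in> E" if "e \<in> M" for e using mMm that unfolding matching_def by auto
  show ?case
  proof (cases "E = {}")
    case True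
    then show ?thesis unfolding covers_def by (intro exI[of _ "{}"]) simp
  next
    case Ene: False
    show ?thesis
    proof (cases "\<exists>v\<in>V. \<forall>N. maxm E N \<longrightarrow> v \<in> \<Union>N")
      case True
      then obtain v where v: "v \<in> V" "\<forall>N. maxm E N \<longrightarrow> v \<in> \<Union>N" by blast
      then have "v \<in> \<Union>M" using mM by blast
      then obtain e where e: "e \<in> M" "v \<in> e" by blast
      then obtain w where vw: "e = {v,w}" "v \<noteq> w" using edge_other[OF sg ME[OF e(1)]] by blast
      define V' where "V' = V - {v}"
      define E' where "E' = {e\<in>E. e \<inter> {v} = {}}"
      define M' where "M' = M - {{v,w}}"
      have rs: "simple_graph V' E' \<and> \<not> (\<exists>vs. is_cycle V' E' vs \<and> odd (length vs) \<and> length vs > 3)"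
        unfolding V'_def E'_def using restrict[OF sg cls] .
      have cV: "card V' < card V" unfolding V'_def by (rule card_Diff1_less[OF fV v(1)])
      have vwM: "{v,w} \<in> M" using e vw by simp
      have M'v: "v \<notin> g" if "g \<in> M'" for g
        using that match_unique[OF mMm _ vwM, of g v] unfolding M'_def by auto
      have cM': "card M' = card M - 1" unfolding M'_def using vwM fM by simp
      have "card M \<noteq> 0" using vwM fM by auto
      then have cM: "card M \<ge> 1" by simp
      have M'm: "matching E' M'"
        using mMm M'v unfolding matching_def M'_def E'_def by auto
      have M'max: "maxm E' M'" unfolding maxm_def
      proof (intro conjI allI impI)
        show "matching E' M'" by (rule M'm)
        fix K assume K: "matching E' K"
        have KE: "matching E K" using K unfolding matching_def E'_def by auto
        have Kv: "v \<notin> \<Union>K" using K unfolding matching_def E'_def by auto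
        have "card K \<le> card M" using mM KE unfolding maxm_def by blast
        moreover have "card K \<noteq> card M"
        proof
          assume "card K = card M"
          then have "maxm E K" using mM KE unfolding maxm_def by simp
          then show False using v(2) Kv by blast
        qed
        ultimately show "card K \<le> card M'" using cM' by simp
      qed
      obtain Q' where Q': "Q' \<subseteq> V'" "card Q' \<le> card M'" "covers Q' (E' - M')"
        using less.hyps[OF cV conjunct1[OF rs] conjunct2[OF rs] M'max] by blast
      have fQ': "finite Q'" using Q'(1) fV unfolding V'_def using finite_subset by blast
      have "insert v Q' \<subseteq> V" using Q'(1) v(1) unfolding V'_def by auto
      moreover have "card (insert v Q') \<le> card M"
      proof -
        have "card (insert v Q') \<le> Suc (card Q')" using fQ' by (simp add: card_insert_if)
        then show ?thesis using Q'(2) cM' cM by simp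
      qed
      moreover have "covers (insert v Q') (E - M)" unfolding covers_def
      proof
        fix g assume g: "g \<in> E - M"
        show "g \<inter> insert v Q' \<noteq> {}"
        proof (cases "v \<in> g")
          case True then show ?thesis by blast
        next
          case False
          then have "g \<in> E' - M'" using g unfolding E'_def M'_def by auto
          then show ?thesis using Q'(3) unfolding covers_def by blast
        qed
      qed
      ultimately show ?thesis by blast
    next
      case False
      then have ine: "\<forall>v\<in>V. \<exists>N. maxm E N \<and> v \<notin> \<Union>N" by blast
      obtain a b c where abc: "{a,b} \<in> E" "{a,c} \<in> E" "{b,c} \<in> E" "\<forall>u. {a,u} \<in> E \<longrightarrow> u = b \<or> u = c"
        "\<forall>u. {b,u} \<in> E \<longrightarrow> u = a \<or> u = c"
        using pendant[OF sg cls ine Ene] by blast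
      have ab: "a \<noteq> b" "a \<in> V" "b \<in> V" using simple_edge[OF sg abc(1)] by auto
      have ac: "a \<noteq> c" "c \<in> V" using simple_edge[OF sg abc(2)] by auto
      have bc: "b \<noteq> c" using simple_edge[OF sg abc(3)] by auto
      define Tr where "Tr = {{a,b},{a,c},{b,c}}"
      have touch: "g \<in> Tr" if gE: "g \<in> E" and gab: "a \<in> g \<or> b \<in> g" for g
      proof -
        from gab show ?thesis
        proof
          assume "a \<in> g"
          then obtain u where "g = {a,u}" using edge_other[OF sg gE] by blast
          then show ?thesis using abc(4) gE unfolding Tr_def by auto
        next
          assume "b \<in> g"
          then obtain u where "g = {b,u}" using edge_other[OF sg gE] by blast
          then show ?thesis using abc(5) gE unfolding Tr_def by (auto simp: insert_commute)
        qed
      qed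
      have Trshare: "g \<inter> h \<noteq> {}" if "g \<in> Tr" "h \<in> Tr" for g h using that unfolding Tr_def by auto
      have "\<exists>t\<in>M. a \<in> t \<or> b \<in> t"
      proof (rule ccontr)
        assume "\<not> (\<exists>t\<in>M. a \<in> t \<or> b \<in> t)"
        then have "a \<notin> \<Union>M" "b \<notin> \<Union>M" by auto
        then show False using maxm_cover[OF mM fE abc(1)] by blast
      qed
      then obtain t where t: "t \<in> M" "a \<in> t \<or> b \<in> t" by blast
      have tT: "t \<in> Tr" using touch[OF ME[OF t(1)] t(2)] .
      have uniq: "g = t" if "g \<in> M" "a \<in> g \<or> b \<in> g" for g
      proof -
        have "g \<in> Tr" using touch[OF ME[OF that(1)] that(2)] .
        then obtain z where "z \<in> g" "z \<in> t" using Trshare[OF _ tT] by blast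
        then show ?thesis using match_unique[OF mMm that(1) t(1)] by blast
      qed
      obtain w where w: "w \<in> V" "\<forall>g\<in>Tr. g \<noteq> t \<longrightarrow> w \<in> g"
      proof -
        have "t = {a,b} \<or> t = {a,c} \<or> t = {b,c}" using tT unfolding Tr_def by auto
        then show ?thesis
        proof (elim disjE)
          assume "t = {a,b}" then show ?thesis using that[of c] ac unfolding Tr_def by auto
        next
          assume "t = {a,c}" then show ?thesis using that[of b] ab ac bc unfolding Tr_def by (auto simp: doubleton_eq_iff)
        next
          assume "t = {b,c}" then show ?thesis using that[of a] ab ac bc unfolding Tr_def by (auto simp: doubleton_eq_iff)
        qed
      qed
      define V' where "V' = V - {a,b}"
      define E' where "E' = {e\<in>E. e \<inter> {a,b} = {}}"
      define M' where "M' = M - {t}"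
      have rs: "simple_graph V' E' \<and> \<not> (\<exists>vs. is_cycle V' E' vs \<and> odd (length vs) \<and> length vs > 3)"
        unfolding V'_def E'_def using restrict[OF sg cls] .
      have "V' \<subset> V" unfolding V'_def using ab by blast
      then have cV: "card V' < card V" using psubset_card_mono[OF fV] by blast
      have M'ab: "g \<inter> {a,b} = {}" if "g \<in> M'" for g
        using that uniq unfolding M'_def by blast
      have cM': "card M' = card M - 1" unfolding M'_def using t(1) fM by simp
      have "card M \<noteq> 0" using t(1) fM by auto
      then have cM: "card M \<ge> 1" by simp
      have M'm: "matching E' M'"
        using mMm M'ab unfolding matching_def M'_def E'_def by auto
      have M'max: "maxm E' M'" unfolding maxm_def
      proof (intro conjI allI impI)
        show "matching E' M'" by (rule M'm)
        fix K assume K: "matching E' K"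
        have KE: "matching E K" using K unfolding matching_def E'_def by auto
        have Ka: "a \<notin> \<Union>K" "b \<notin> \<Union>K" using K unfolding matching_def E'_def by auto
        have fK: "finite K" using matching_finite[OF fE KE] .
        have "card (insert {a,b} K) = Suc (card K)" "matching E (insert {a,b} K)"
          using aug1[OF KE abc(1) Ka fK] by auto
        then have "card (insert {a,b} K) \<le> card M" using mM unfolding maxm_def by blast
        then have "Suc (card K) \<le> card M" using \<open>card (insert {a,b} K) = Suc (card K)\<close> by simp
        then show "card K \<le> card M'" using cM' by simp
      qed
      have cVV: "card V' < card V" using cV .
      obtain Q' where Q': "Q' \<subseteq> V'" "card Q' \<le> card M'" "covers Q' (E' - M')"
        using less.hyps[OF cVV conjunct1[OF rs] conjunct2[OF rs] M'max] by blast
      have fQ': "finite Q'" using Q'(1) fV unfolding V'_def using finite_subset by blast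
      have "insert w Q' \<subseteq> V" using Q'(1) w(1) unfolding V'_def by auto
      moreover have "card (insert w Q') \<le> card M"
      proof -
        have "card (insert w Q') \<le> Suc (card Q')" using fQ' by (simp add: card_insert_if)
        then show ?thesis using Q'(2) cM' cM by simp
      qed
      moreover have "covers (insert w Q') (E - M)" unfolding covers_def
      proof
        fix g assume g: "g \<in> E - M"
        show "g \<inter> insert w Q' \<noteq> {}"
        proof (cases "a \<in> g \<or> b \<in> g")
          case True
          then have "g \<in> Tr" using touch g by blast
          moreover have "g \<noteq> t" using g t(1) by blast
          ultimately have "w \<in> g" using w(2) by blast
          then show ?thesis by blast
        next
          case False
          then have "g \<in> E' - M'" using g unfolding E'_def M'_def by auto
          then show ?thesis using Q'(3) unfolding covers_def by blast
        qed
      qed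
      ultimately show ?thesis by blast
    qed
  qed
qed

theorem proposition4p8:
  fixes V :: "'a set" and E :: "'a set set"
  assumes "simple_graph V E"
    and "\<not> (\<exists>vs. is_cycle V E vs \<and> odd (length vs) \<and> length vs > 3)"
  shows "weak_KE V E"
proof -
  have fE: "finite E" using simple_finite[OF assms(1)] .
  have b: "\<forall>M. matching E M \<longrightarrow> card M < Suc (card E)"
  proof (intro allI impI)
    fix M assume "matching E M"
    then have "M \<subseteq> E" unfolding matching_def by simp
    then have "card M \<le> card E" using card_mono[OF fE] by blast
    then show "card M < Suc (card E)" by simp
  qed
  have m0: "matching E {}" unfolding matching_def by simp
  obtain M where M: "matching E M" "\<forall>M'. matching E M' \<longrightarrow> card M' \<le> card M"
    using ex_has_greatest_nat[where P="matching E" and k="{}" and f=card and b="Suc (card E)"] m0 b by blast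
  have "maxm E M" unfolding maxm_def using M by blast
  then obtain Q where "Q \<subseteq> V" "card Q \<le> card M" "covers Q (E - M)" using main[OF assms] by blast
  then show ?thesis unfolding weak_KE_def using M(1) by blast
qed

end
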